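(* With the setting in the context, for all $s\in\mathrm{hom}(C,G)_{-1}$ and $v\in\mathrm{hom}(C,G)^1$, $$\mathcal A_s=\prod_n\prod_{x\in K_n}A_x^{s_n(x)},\qquad \mathcal B_v=\prod_n\prod_{x\in K_n}B_x^{v_n(x)},$$ where $s_n(x)\in\widehat G_{n+1}$ is defined by $s_n(x)(g)=s(gx^* )$ for $g\in G_{n+1}$, and $v_n(x)\in G_{n-1}$ is the value of the $n$-th component of $v$ at $x$.
   Context: $(C_\bullet,\partial^C_\bullet)$ is a chain complex with each $C_n$ free abelian on a finite set $K_n$, $K_n\ne\emptyset$ for finitely many $n$; $(G_\bullet,\partial^G_\bullet)$ is a chain complex of finite abelian groups, $\widehat{G}_k=\mathrm{Hom}(G_k,U(1))$. $\mathrm{hom}(C,G)^p=\prod_n\mathrm{Hom}(C_n,G_{n-p})$ with $(\delta^pf)_n=f_{n-1}\partial^C_n-(-1)^p\partial^G_{n-p}f_n$. $\mathrm{hom}(C,G)_p=\mathrm{Hom}(\mathrm{hom}(C,G)^p,U(1))$ (written additively), $\chi_m(f)=m(f)$, $\delta_1m=m\circ\delta^0$. $\mathcal H=\bigotimes_n\bigotimes_{x\in K_n}\mathbb C[G_n]$ with orthonormal basis $|f\rangle$, $f\in\mathrm{hom}(C,G)^0$; $P_t|f\rangle=|f+t\rangle$, $Q_m|f\rangle=\chi_m(f)|f\rangle$; $A_t=P_{\delta^{-1}t}$, $B_m=Q_{\delta_1m}$. $\mathcal A_s=\frac1{|\mathrm{hom}(C,G)^{-1}|}\sum_{t\in\mathrm{hom}(C,G)^{-1}}\chi_s(t)A_t$,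 $\mathcal B_v=\frac1{|\mathrm{hom}(C,G)_1|}\sum_{m\in\mathrm{hom}(C,G)_1}\chi_m(v)B_m$. For $x\in K_n$, $g\in G_{n-p}$, $gx^*\in\mathrm{hom}(C,G)^p$ has $n$-th component sending $x\mapsto g$ and other elements of $K_n$ to $0$, other components $0$; for $r\in\widehat G_{n-p}$, $rx_*(f)=r(f_n(x))$. For $x\in K_n$: $A_x^r=\frac1{|G_{n+1}|}\sum_{h\in G_{n+1}}r(h)A_{hx^*}$ ($r\in\widehat G_{n+1}$), $B_x^g=\frac1{|G_{n-1}|}\sum_{r\in\widehat G_{n-1}}r(g)B_{rx_*}$ ($g\in G_{n-1}$). *)

theory Defs
  imports Complex_Main "HOL-Algebra.Algebra"
begin

(* C_n is free abelian on K n; the boundary of C is given by its integer matrix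
   dC n x y = coefficient of y in the boundary of x (x in K n, y in K (n-1)).
   A homomorphism C_n -> G_k is identified with its restriction to the basis K n.
   Elements of hom(C,G)^p are families f with f n y in carrier (G (n-p)) for
   y in K n, and f n y = undefined otherwise (extensional).
   U(1)-valued characters are complex-valued functions of modulus 1. *)

type_synonym ('c,'g) fam = "int \<Rightarrow> 'c \<Rightarrow> 'g"

definition homsup :: "(int \<Rightarrow> 'c set) \<Rightarrow> (int \<Rightarrow> 'g monoid) \<Rightarrow> int \<Rightarrow> ('c,'g) fam set" where
  "homsup K G p = {f. \<forall>n y. (y \<in> K n \<longrightarrow> f n y \<in> carrier (G (n - p))) \<and>
                              (y \<notin> K n \<longrightarrow> f n y = undefined)}"

definition fam_add :: "(int \<Rightarrow> 'c set) \<Rightarrow> (int \<Rightarrow> 'g monoid) \<Rightarrow> int \<Rightarrow> ('c,'g) fam \<Rightarrow> ('c,'g) fam \<Rightarrow> ('c,'g) fam" where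
  "fam_add K G p f g = (\<lambda>n y. if y \<in> K n then f n y \<otimes>\<^bsub>G (n - p)\<^esub> g n y else undefined)"

definition homsub :: "(int \<Rightarrow> 'c set) \<Rightarrow> (int \<Rightarrow> 'g monoid) \<Rightarrow> int \<Rightarrow> (('c,'g) fam \<Rightarrow> complex) set" where
  "homsub K G p = {m. m \<in> extensional (homsup K G p) \<and>
      (\<forall>f \<in> homsup K G p. cmod (m f) = 1) \<and>
      (\<forall>f \<in> homsup K G p. \<forall>g \<in> homsup K G p. m (fam_add K G p f g) = m f * m g)}"

definition gchars :: "'g monoid \<Rightarrow> ('g \<Rightarrow> complex) set" where
  "gchars H = {r. r \<in> extensional (carrier H) \<and> (\<forall>a \<in> carrier H. cmod (r a) = 1) \<and>
      (\<forall>a \<in> carrier H. \<forall>b \<in> carrier H. r (a \<otimes>\<^bsub>H\<^esub> b) = r a * r b)}"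

text \<open>The coboundary delta^p : hom(C,G)^p -> hom(C,G)^(p+1),
  (delta^p f)_n = f_(n-1) o dC_n - (-1)^p dG_(n-p) o f_n.\<close>
definition cobdry :: "(int \<Rightarrow> 'c set) \<Rightarrow> (int \<Rightarrow> 'c \<Rightarrow> 'c \<Rightarrow> int) \<Rightarrow> (int \<Rightarrow> 'g monoid) \<Rightarrow>
    (int \<Rightarrow> 'g \<Rightarrow> 'g) \<Rightarrow> int \<Rightarrow> ('c,'g) fam \<Rightarrow> ('c,'g) fam" where
  "cobdry K dC G dG p f = (\<lambda>n y. if y \<in> K n then
      (finprod (G (n - (p + 1))) (\<lambda>z. f (n - 1) z [^]\<^bsub>G (n - (p + 1))\<^esub> dC n y z) (K (n - 1)))
      \<otimes>\<^bsub>G (n - (p + 1))\<^esub>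
      (if even p then inv\<^bsub>G (n - (p + 1))\<^esub> (dG (n - p) (f n y)) else dG (n - p) (f n y))
    else undefined)"

text \<open>Operators on H are represented by their matrices w.r.t. the basis |f>, f in hom(C,G)^0:
  M a b = <a| M |b>.\<close>
type_synonym ('c,'g) op = "('c,'g) fam \<Rightarrow> ('c,'g) fam \<Rightarrow> complex"

definition mat_mult :: "('c,'g) fam set \<Rightarrow> ('c,'g) op \<Rightarrow> ('c,'g) op \<Rightarrow> ('c,'g) op" where
  "mat_mult B M N = (\<lambda>a b. \<Sum>c\<in>B. M a c * N c b)"

definition mat_one :: "('c,'g) op" where
  "mat_one = (\<lambda>a b. if a = b then 1 else 0)"

definition mat_prod_list :: "('c,'g) fam set \<Rightarrow> ('c,'g) op list \<Rightarrow> ('c,'g) op" where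
  "mat_prod_list B Ms = foldr (mat_mult B) Ms mat_one"

text \<open>P_t |f> = |f + t>,  Q_m |f> = chi_m(f) |f>.\<close>
definition opP :: "(int \<Rightarrow> 'c set) \<Rightarrow> (int \<Rightarrow> 'g monoid) \<Rightarrow> ('c,'g) fam \<Rightarrow> ('c,'g) op" where
  "opP K G t = (\<lambda>a b. if a = fam_add K G 0 b t then 1 else 0)"

definition opQ :: "(('c,'g) fam \<Rightarrow> complex) \<Rightarrow> ('c,'g) op" where
  "opQ m = (\<lambda>a b. if a = b then m b else 0)"

definition opA :: "(int \<Rightarrow> 'c set) \<Rightarrow> (int \<Rightarrow> 'c \<Rightarrow> 'c \<Rightarrow> int) \<Rightarrow> (int \<Rightarrow> 'g monoid) \<Rightarrow>
    (int \<Rightarrow> 'g \<Rightarrow> 'g) \<Rightarrow> ('c,'g) fam \<Rightarrow> ('c,'g) op" where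
  "opA K dC G dG t = opP K G (cobdry K dC G dG (-1) t)"

definition opB :: "(int \<Rightarrow> 'c set) \<Rightarrow> (int \<Rightarrow> 'c \<Rightarrow> 'c \<Rightarrow> int) \<Rightarrow> (int \<Rightarrow> 'g monoid) \<Rightarrow>
    (int \<Rightarrow> 'g \<Rightarrow> 'g) \<Rightarrow> (('c,'g) fam \<Rightarrow> complex) \<Rightarrow> ('c,'g) op" where
  "opB K dC G dG m = opQ (\<lambda>f. m (cobdry K dC G dG 0 f))"

definition bigA :: "(int \<Rightarrow> 'c set) \<Rightarrow> (int \<Rightarrow> 'c \<Rightarrow> 'c \<Rightarrow> int) \<Rightarrow> (int \<Rightarrow> 'g monoid) \<Rightarrow>
    (int \<Rightarrow> 'g \<Rightarrow> 'g) \<Rightarrow> (('c,'g) fam \<Rightarrow> complex) \<Rightarrow> ('c,'g) op" where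
  "bigA K dC G dG s = (\<lambda>a b. (1 / of_nat (card (homsup K G (-1)))) *
      (\<Sum>t \<in> homsup K G (-1). s t * opA K dC G dG t a b))"

definition bigB :: "(int \<Rightarrow> 'c set) \<Rightarrow> (int \<Rightarrow> 'c \<Rightarrow> 'c \<Rightarrow> int) \<Rightarrow> (int \<Rightarrow> 'g monoid) \<Rightarrow>
    (int \<Rightarrow> 'g \<Rightarrow> 'g) \<Rightarrow> ('c,'g) fam \<Rightarrow> ('c,'g) op" where
  "bigB K dC G dG v = (\<lambda>a b. (1 / of_nat (card (homsub K G 1))) *
      (\<Sum>m \<in> homsub K G 1. m v * opB K dC G dG m a b))"

definition costar :: "(int \<Rightarrow> 'c set) \<Rightarrow> (int \<Rightarrow> 'g monoid) \<Rightarrow> int \<Rightarrow> int \<Rightarrow> 'c \<Rightarrow> 'g \<Rightarrow> ('c,'g) fam" where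
  "costar K G p n x g = (\<lambda>k y. if y \<in> K k then (if k = n \<and> y = x then g else \<one>\<^bsub>G (k - p)\<^esub>)
                              else undefined)"

definition pushch :: "(int \<Rightarrow> 'c set) \<Rightarrow> (int \<Rightarrow> 'g monoid) \<Rightarrow> int \<Rightarrow> int \<Rightarrow> 'c \<Rightarrow> ('g \<Rightarrow> complex) \<Rightarrow>
    (('c,'g) fam \<Rightarrow> complex)" where
  "pushch K G p n x r = (\<lambda>f. if f \<in> homsup K G p then r (f n x) else undefined)"

definition locA :: "(int \<Rightarrow> 'c set) \<Rightarrow> (int \<Rightarrow> 'c \<Rightarrow> 'c \<Rightarrow> int) \<Rightarrow> (int \<Rightarrow> 'g monoid) \<Rightarrow>
    (int \<Rightarrow> 'g \<Rightarrow> 'g) \<Rightarrow> int \<Rightarrow> 'c \<Rightarrow> ('g \<Rightarrow> complex) \<Rightarrow> ('c,'g) op" where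
  "locA K dC G dG n x r = (\<lambda>a b. (1 / of_nat (card (carrier (G (n + 1))))) *
      (\<Sum>h \<in> carrier (G (n + 1)). r h * opA K dC G dG (costar K G (-1) n x h) a b))"

definition locB :: "(int \<Rightarrow> 'c set) \<Rightarrow> (int \<Rightarrow> 'c \<Rightarrow> 'c \<Rightarrow> int) \<Rightarrow> (int \<Rightarrow> 'g monoid) \<Rightarrow>
    (int \<Rightarrow> 'g \<Rightarrow> 'g) \<Rightarrow> int \<Rightarrow> 'c \<Rightarrow> 'g \<Rightarrow> ('c,'g) op" where
  "locB K dC G dG n x g = (\<lambda>a b. (1 / of_nat (card (carrier (G (n - 1))))) *
      (\<Sum>r \<in> gchars (G (n - 1)). r g * opB K dC G dG (pushch K G 1 n x r) a b))"

definition s_comp :: "(int \<Rightarrow> 'c set) \<Rightarrow> (int \<Rightarrow> 'g monoid) \<Rightarrow> (('c,'g) fam \<Rightarrow> complex) \<Rightarrow>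
    int \<Rightarrow> 'c \<Rightarrow> ('g \<Rightarrow> complex)" where
  "s_comp K G s n x = (\<lambda>g. if g \<in> carrier (G (n + 1)) then s (costar K G (-1) n x g) else undefined)"

end

theory Submission
  imports Defs
begin


context comm_group
begin

lemma sub_pow_closed:
  assumes "subgroup H G" "h \<in> H" shows "h [^] (n::nat) \<in> H"
  using assms by (induct n) (auto intro: subgroup.m_closed subgroup.one_closed)

lemma chr_one:
  assumes "subgroup H G" "\<forall>a\<in>H. \<forall>b\<in>H. \<chi> (a \<otimes> b) = \<chi> a * \<chi> b" "\<forall>a\<in>H. cmod (\<chi> a) = 1"
  shows "\<chi> \<one> = 1"
proof -
  have h: "\<one> \<in> H" using assms(1) subgroup.one_closed by blast
  have "\<chi> \<one> * \<chi> \<one> = \<chi> \<one> * 1" using assms(2) h by (metis l_one one_closed mult_1_right)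
  moreover have "\<chi> \<one> \<noteq> 0" using assms(3) h by auto
  ultimately show ?thesis by simp
qed

lemma chr_pow:
  assumes "subgroup H G" "\<forall>a\<in>H. \<forall>b\<in>H. \<chi> (a \<otimes> b) = \<chi> a * \<chi> b" "\<forall>a\<in>H. cmod (\<chi> a) = 1"
    and "h \<in> H"
  shows "\<chi> (h [^] (n::nat)) = \<chi> h ^ n"
proof (induct n)
  case 0 then show ?case using chr_one[OF assms(1-3)] by simp
next
  case (Suc n) then show ?case using assms sub_pow_closed[OF assms(1,4)] by (simp add: mult.commute)
qed

lemma exists_pos_pow:
  assumes fin: "finite (carrier G)" and "subgroup H G" "g \<in> carrier G"
  shows "\<exists>k>0. g [^] (k::nat) \<in> H"
proof -
  have "card (carrier G) > 0" using fin one_closed card_gt_0_iff by blast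
  moreover have "g [^] card (carrier G) \<in> H"
    using power_order_eq_one[OF fin assms(3)] assms(2) subgroup.one_closed by auto
  ultimately show ?thesis by blast
qed

lemma least_pow_dvd:
  assumes fin: "finite (carrier G)" and H: "subgroup H G" and g: "g \<in> carrier G"
    and k: "k = (LEAST k. 0 < k \<and> g [^] (k::nat) \<in> H)"
  shows "0 < k" "g [^] k \<in> H" "\<And>m. g [^] (m::nat) \<in> H \<Longrightarrow> k dvd m"
proof -
  obtain k0 where "0 < k0 \<and> g [^] (k0::nat) \<in> H" using exists_pos_pow[OF fin H g] by blast
  then have kk: "0 < k \<and> g [^] k \<in> H" unfolding k by (rule LeastI)
  then show "0 < k" "g [^] k \<in> H" by auto
  fix m :: nat assume m: "g [^] m \<in> H"
  define q where "q = m div k"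
  define r where "r = m mod k"
  have mqr: "m = k * q + r" unfolding q_def r_def by simp
  have "g [^] m = (g [^] k) [^] q \<otimes> g [^] r"
    using g by (simp add: mqr nat_pow_pow nat_pow_mult)
  then have "g [^] r = inv ((g [^] k) [^] q) \<otimes> g [^] m"
    using g by (metis inv_closed l_inv l_one m_assoc nat_pow_closed)
  then have gr: "g [^] r \<in> H"
    using kk m H sub_pow_closed[OF H] by (metis subgroup.m_closed subgroup.m_inv_closed)
  have "r < k" unfolding r_def using kk by simp
  have "r = 0"
  proof (rule ccontr)
    assume "r \<noteq> 0"
    then have "k \<le> r" unfolding k using gr by (intro Least_le) simp
    then show False using \<open>r < k\<close> by simp
  qed
  then show "k dvd m" using mqr by simp
qed

definition ext_chr :: "'a set \<Rightarrow> ('a \<Rightarrow> complex) \<Rightarrow> 'a \<Rightarrow> complex \<Rightarrow> 'a \<Rightarrow> complex" where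
  "ext_chr H \<chi> g z x = (let p = (SOME p. fst p \<in> H \<and> x = fst p \<otimes> g [^] (snd p :: nat))
     in \<chi> (fst p) * z ^ snd p)"

lemma ext_step:
  assumes fin: "finite (carrier G)" and H: "subgroup H G"
    and cm: "\<forall>a\<in>H. \<forall>b\<in>H. \<chi> (a \<otimes> b) = \<chi> a * \<chi> b" and cmod: "\<forall>a\<in>H. cmod (\<chi> a) = 1"
    and g: "g \<in> carrier G"
    and k: "k = (LEAST k. 0 < k \<and> g [^] (k::nat) \<in> H)"
    and z: "z ^ k = \<chi> (g [^] k)" "cmod z = 1"
    and H': "H' = {x. \<exists>h j. h \<in> H \<and> x = h \<otimes> g [^] (j::nat)}"
  shows "subgroup H' G" "\<forall>a\<in>H'. \<forall>b\<in>H'. ext_chr H \<chi> g z (a \<otimes> b) = ext_chr H \<chi> g z a * ext_chr H \<chi> g z b"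
    "\<forall>a\<in>H'. cmod (ext_chr H \<chi> g z a) = 1" "\<forall>a\<in>H. ext_chr H \<chi> g z a = \<chi> a"
    "ext_chr H \<chi> g z g = z" "H \<subseteq> H'" "g \<in> H'"
proof -
  note kp = least_pow_dvd[OF fin H g k]
  have HG: "H \<subseteq> carrier G" using H subgroup.subset by blast
  have c1: "\<chi> \<one> = 1" using chr_one[OF H cm cmod] .
  have zpow: "\<chi> (g [^] m) = z ^ m" if gm: "g [^] m \<in> H" for m :: nat
  proof -
    obtain q where q: "m = k * q" using kp(3)[OF gm] by (elim dvdE)
    have "\<chi> (g [^] m) = \<chi> ((g [^] k) [^] q)" using g by (simp add: q nat_pow_pow)
    also have "\<dots> = \<chi> (g [^] k) ^ q" using chr_pow[OF H cm cmod kp(2)] .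
    also have "\<dots> = z ^ m" using z(1) by (simp add: q power_mult)
    finally show ?thesis .
  qed
  have wd1: "\<chi> h1 * z ^ i = \<chi> h2 * z ^ j"
    if "h1 \<in> H" "h2 \<in> H" "h1 \<otimes> g [^] i = h2 \<otimes> g [^] j" "i \<le> j" for h1 h2 i j
  proof -
    obtain d where d: "j = i + d" using \<open>i \<le> j\<close> le_Suc_ex by blast
    have c: "h1 \<in> carrier G" "h2 \<in> carrier G" using that HG by auto
    have "g [^] j = g [^] d \<otimes> g [^] i" using g by (simp add: d nat_pow_mult add.commute)
    then have "h1 \<otimes> g [^] i = (h2 \<otimes> g [^] d) \<otimes> g [^] i"
      using that(3) g c by (simp add: m_assoc)
    then have e: "h1 = h2 \<otimes> g [^] d" using right_cancel[of "g [^] i" h1 "h2 \<otimes> g [^] d"] g c by blast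
    then have "g [^] d = inv h2 \<otimes> h1" using c g by (simp add: m_assoc[symmetric])
    then have gd: "g [^] d \<in> H" using that H by (metis subgroup.m_closed subgroup.m_inv_closed)
    have "\<chi> h1 = \<chi> h2 * z ^ d" using e cm that gd zpow by simp
    then show ?thesis by (simp add: d power_add)
  qed
  have wd: "\<chi> h1 * z ^ i = \<chi> h2 * z ^ j"
    if "h1 \<in> H" "h2 \<in> H" "h1 \<otimes> g [^] i = h2 \<otimes> g [^] j" for h1 h2 i j
    using wd1[OF that] wd1[OF that(2,1) that(3)[symmetric]] by (cases "i \<le> j") auto
  have ev: "ext_chr H \<chi> g z x = \<chi> h * z ^ j" if "h \<in> H" "x = h \<otimes> g [^] j" for x h j
  proof -
    let ?p = "(SOME p. fst p \<in> H \<and> x = fst p \<otimes> g [^] (snd p :: nat))"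
    have "fst ?p \<in> H \<and> x = fst ?p \<otimes> g [^] (snd ?p :: nat)"
      by (rule someI[of _ "(h, j)"]) (use that in simp)
    then have "\<chi> (fst ?p) * z ^ snd ?p = \<chi> h * z ^ j" using that by (intro wd) auto
    then show ?thesis unfolding ext_chr_def Let_def .
  qed
  show "H \<subseteq> H'" unfolding H'
  proof
    fix x assume "x \<in> H" then show "x \<in> {x. \<exists>h j. h \<in> H \<and> x = h \<otimes> g [^] (j::nat)}"
      using HG by (intro CollectI exI[of _ x] exI[of _ "0::nat"]) auto
  qed
  show "g \<in> H'" unfolding H' using g H subgroup.one_closed
    by (intro CollectI exI[of _ \<one>] exI[of _ "1::nat"]) auto
  show "\<forall>a\<in>H. ext_chr H \<chi> g z a = \<chi> a"
  proof
    fix a assume a: "a \<in> H"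
    then have "a = a \<otimes> g [^] (0::nat)" using HG by auto
    from ev[OF a this] show "ext_chr H \<chi> g z a = \<chi> a" by simp
  qed
  have "g = \<one> \<otimes> g [^] (1::nat)" using g by simp
  from ev[OF _ this] show "ext_chr H \<chi> g z g = z"
    using c1 H subgroup.one_closed by fastforce
  show "\<forall>a\<in>H'. cmod (ext_chr H \<chi> g z a) = 1"
  proof
    fix a assume "a \<in> H'"
    then obtain h j where hh: "h \<in> H" "a = h \<otimes> g [^] (j::nat)" unfolding H' by blast
    show "cmod (ext_chr H \<chi> g z a) = 1" unfolding ev[OF hh] using cmod hh z(2) by (simp add: norm_mult norm_power)
  qed
  show "\<forall>a\<in>H'. \<forall>b\<in>H'. ext_chr H \<chi> g z (a \<otimes> b) = ext_chr H \<chi> g z a * ext_chr H \<chi> g z b"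
  proof (intro ballI)
    fix a b assume "a \<in> H'" "b \<in> H'"
    then obtain h1 i h2 j where hh: "h1 \<in> H" "a = h1 \<otimes> g [^] (i::nat)" "h2 \<in> H" "b = h2 \<otimes> g [^] (j::nat)"
      unfolding H' by blast
    have c: "h1 \<in> carrier G" "h2 \<in> carrier G" using hh(1,3) HG by auto
    have gij: "g [^] (i + j) = g [^] i \<otimes> g [^] j" using g by (simp add: nat_pow_mult)
    have ab: "a \<otimes> b = (h1 \<otimes> h2) \<otimes> g [^] (i + j)"
      unfolding gij hh(2,4) using c g nat_pow_closed[OF g] by (simp add: m_ac)
    have hH: "h1 \<otimes> h2 \<in> H" using subgroup.m_closed[OF H hh(1) hh(3)] .
    have e1: "ext_chr H \<chi> g z (a \<otimes> b) = \<chi> (h1 \<otimes> h2) * z ^ (i + j)" by (rule ev[OF hH ab])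
    have e2: "\<chi> (h1 \<otimes> h2) = \<chi> h1 * \<chi> h2" using cm hh(1,3) by simp
    show "ext_chr H \<chi> g z (a \<otimes> b) = ext_chr H \<chi> g z a * ext_chr H \<chi> g z b"
      unfolding e1 e2 ev[OF hh(1,2)] ev[OF hh(3,4)] by (simp add: power_add)
  qed
  show "subgroup H' G"
  proof
    show "H' \<subseteq> carrier G" unfolding H' using HG g by auto
    show "\<one> \<in> H'" using \<open>H \<subseteq> H'\<close> H subgroup.one_closed by blast
    fix a b assume "a \<in> H'" "b \<in> H'"
    then obtain h1 i h2 j where hh: "h1 \<in> H" "a = h1 \<otimes> g [^] (i::nat)" "h2 \<in> H" "b = h2 \<otimes> g [^] (j::nat)"
      unfolding H' by blast
    have c: "h1 \<in> carrier G" "h2 \<in> carrier G" using hh(1,3) HG by auto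
    have gij: "g [^] (i + j) = g [^] i \<otimes> g [^] j" using g by (simp add: nat_pow_mult)
    have "a \<otimes> b = (h1 \<otimes> h2) \<otimes> g [^] (i + j)"
      unfolding gij hh(2,4) using c g nat_pow_closed[OF g] by (simp add: m_ac)
    moreover have "h1 \<otimes> h2 \<in> H" using subgroup.m_closed[OF H hh(1) hh(3)] .
    ultimately show "a \<otimes> b \<in> H'" unfolding H' by blast
    define N where "N = card (carrier G)"
    have N: "N > 0" using fin one_closed card_gt_0_iff N_def by blast
    have gN: "g [^] N = \<one>" using power_order_eq_one[OF fin g] N_def by simp
    have "inv (g [^] i) = g [^] (i * (N - 1))"
    proof -
      have "i + i * (N - 1) = N * i" using N by (cases N) auto
      then have "g [^] i \<otimes> g [^] (i * (N - 1)) = g [^] (N * i)"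
        using nat_pow_mult[OF g, of i "i * (N - 1)"] by simp
      also have "\<dots> = \<one>" using g gN by (simp add: nat_pow_pow[symmetric])
      finally have e: "g [^] i \<otimes> g [^] (i * (N - 1)) = \<one>" .
      then have "g [^] (i * (N - 1)) \<otimes> g [^] i = \<one>" by (metis e m_comm nat_pow_closed g)
      then show ?thesis by (rule inv_equality) (use g in simp_all)
    qed
    then have "inv a = inv h1 \<otimes> g [^] (i * (N - 1))"
      unfolding hh(2) using c g by (simp add: inv_mult)
    moreover have "inv h1 \<in> H" using subgroup.m_inv_closed[OF H hh(1)] .
    ultimately show "inv a \<in> H'" unfolding H' by blast
  qed
qed

lemma root_exists:
  assumes "cmod c = 1" "0 < (k::nat)"
  shows "\<exists>z. z ^ k = c \<and> cmod z = 1"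
proof -
  have c0: "c \<noteq> 0" using assms by auto
  have "cis (Arg c) = c" using cis_Arg[OF c0] assms by (simp add: sgn_div_norm)
  moreover have "cis (Arg c / real k) ^ k = cis (Arg c)" using assms by (simp add: DeMoivre)
  ultimately show ?thesis by (intro exI[of _ "cis (Arg c / real k)"]) simp
qed

end

lemma gchars_restrict:
  fixes G :: "'g monoid" (structure)
  assumes cg: "comm_group G" and "\<forall>a\<in>carrier G. \<forall>b\<in>carrier G. \<chi> (a \<otimes> b) = \<chi> a * \<chi> b" "\<forall>a\<in>carrier G. cmod (\<chi> a) = 1"
  shows "restrict \<chi> (carrier G) \<in> gchars G"
proof -
  interpret comm_group G by (rule cg)
  show ?thesis using assms unfolding gchars_def by auto
qed

lemma chr_extend:
  fixes G :: "'g monoid" (structure)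
  assumes cg: "comm_group G" and fin: "finite (carrier G)"
  shows "subgroup H G \<Longrightarrow> \<forall>a\<in>H. \<forall>b\<in>H. \<chi> (a \<otimes> b) = \<chi> a * \<chi> b \<Longrightarrow> \<forall>a\<in>H. cmod (\<chi> a) = 1
    \<Longrightarrow> \<exists>\<psi>\<in>gchars G. \<forall>a\<in>H. \<psi> a = \<chi> a"
proof (induct "card (carrier G - H)" arbitrary: H \<chi> rule: less_induct)
  case (less H \<chi>)
  interpret comm_group G by (rule cg)
  have HG: "H \<subseteq> carrier G" using less(2) subgroup.subset by blast
  show ?case
  proof (cases "H = carrier G")
    case True
    then show ?thesis using less(3,4) gchars_restrict[OF cg, of \<chi>] by (intro bexI[of _ "restrict \<chi> (carrier G)"]) auto
  next
    case False
    then obtain g where g: "g \<in> carrier G" "g \<notin> H" using HG by blast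
    define k where "k = (LEAST k. 0 < k \<and> g [^] (k::nat) \<in> H)"
    note kp = least_pow_dvd[OF fin less(2) g(1) k_def]
    have "cmod (\<chi> (g [^] k)) = 1" using less(4) kp(2) by blast
    then obtain z where z: "z ^ k = \<chi> (g [^] k)" "cmod z = 1" using root_exists kp(1) by blast
    define H' where "H' = {x. \<exists>h j. h \<in> H \<and> x = h \<otimes> g [^] (j::nat)}"
    note st = ext_step[OF fin less(2) less(3) less(4) g(1) k_def z H'_def]
    have "carrier G - H' \<subset> carrier G - H" using st(6,7) g by blast
    then have "card (carrier G - H') < card (carrier G - H)"
      using fin by (intro psubset_card_mono) auto
    from less(1)[OF this st(1,2,3)] obtain \<psi> where "\<psi> \<in> gchars G" "\<forall>a\<in>H'. \<psi> a = ext_chr H \<chi> g z a"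
      by blast
    then show ?thesis using st(4,6) by (intro bexI[of _ \<psi>]) auto
  qed
qed

lemma chr_sep:
  fixes G :: "'g monoid" (structure)
  assumes cg: "comm_group G" and fin: "finite (carrier G)" and y: "y \<in> carrier G" "y \<noteq> \<one>"
  shows "\<exists>\<psi>\<in>gchars G. \<psi> y \<noteq> 1"
proof -
  interpret comm_group G by (rule cg)
  define \<chi> :: "'g \<Rightarrow> complex" where "\<chi> = (\<lambda>_. 1)"
  have H: "subgroup {\<one>} G" by (rule triv_subgroup)
  define k where "k = (LEAST k. 0 < k \<and> y [^] (k::nat) \<in> {\<one>})"
  note kp = least_pow_dvd[OF fin H y(1) k_def]
  have "k \<noteq> 1" using kp(2) y by auto
  then have k2: "2 \<le> k" using kp(1) by linarith
  define z where "z = cis (2 * pi / real k)"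
  have zk: "z ^ k = \<chi> (y [^] k)" using kp(1) unfolding z_def \<chi>_def by (simp add: DeMoivre)
  have zn: "cmod z = 1" unfolding z_def by simp
  have "cos (2 * pi / real k) < cos 0"
  proof (rule cos_monotone_0_pi)
    show "0 < 2 * pi / real k" using k2 by simp
    have "2 * pi / real k \<le> 2 * pi / 2" using k2 by (intro divide_left_mono) auto
    then show "2 * pi / real k \<le> pi" by simp
  qed simp
  then have z1: "z \<noteq> 1" unfolding z_def by (auto simp: complex_eq_iff)
  define H' where "H' = {x. \<exists>h j. h \<in> {\<one>} \<and> x = h \<otimes> y [^] (j::nat)}"
  have cm: "\<forall>a\<in>{\<one>}. \<forall>b\<in>{\<one>}. \<chi> (a \<otimes> b) = \<chi> a * \<chi> b" by (simp add: \<chi>_def)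
  have cmo: "\<forall>a\<in>{\<one>}. cmod (\<chi> a) = 1" by (simp add: \<chi>_def)
  note st = ext_step[OF fin H cm cmo y(1) k_def zk zn H'_def, unfolded \<chi>_def]
  obtain \<psi> where "\<psi> \<in> gchars G" "\<forall>a\<in>H'. \<psi> a = ext_chr {\<one>} (\<lambda>_. 1) y z a"
    using chr_extend[OF cg fin st(1,2,3)] by auto
  then show ?thesis using st(5,7) z1 by (intro bexI[of _ \<psi>]) auto
qed

lemma gchars_one:
  fixes G :: "'g monoid" (structure)
  assumes cg: "comm_group G" and c: "\<chi> \<in> gchars G"
  shows "\<chi> \<one> = 1"
proof -
  interpret comm_group G by (rule cg)
  show ?thesis by (rule chr_one[OF subgroup_self]) (use c in \<open>auto simp: gchars_def\<close>)
qed

lemma gchars_pow: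
  fixes G :: "'g monoid" (structure)
  assumes cg: "comm_group G" and c: "\<chi> \<in> gchars G" and a: "a \<in> carrier G"
  shows "\<chi> (a [^] (n::nat)) = \<chi> a ^ n"
proof -
  interpret comm_group G by (rule cg)
  show ?thesis by (rule chr_pow[OF subgroup_self]) (use c a in \<open>auto simp: gchars_def\<close>)
qed

lemma gchars_finite:
  fixes G :: "'g monoid" (structure)
  assumes cg: "comm_group G" and fin: "finite (carrier G)"
  shows "finite (gchars G)"
proof -
  interpret comm_group G by (rule cg)
  define N where "N = card (carrier G)"
  have N: "N > 0" using fin one_closed card_gt_0_iff N_def by blast
  have "gchars G \<subseteq> PiE (carrier G) (\<lambda>_. {z. z ^ N = 1})"
  proof
    fix \<chi> assume c: "\<chi> \<in> gchars G"
    have "\<chi> a ^ N = 1" if "a \<in> carrier G" for a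
      using gchars_pow[OF cg c that, of N, symmetric] power_order_eq_one[OF fin that] gchars_one[OF cg c]
      unfolding N_def by simp
    then show "\<chi> \<in> PiE (carrier G) (\<lambda>_. {z. z ^ N = 1})" using c unfolding gchars_def PiE_def by auto
  qed
  moreover have "finite (PiE (carrier G) (\<lambda>_. {z::complex. z ^ N = 1}))"
    using fin N by (intro finite_PiE finite_roots_unity) auto
  ultimately show ?thesis by (rule finite_subset)
qed

lemma gchars_mult:
  fixes G :: "'g monoid" (structure)
  assumes cg: "comm_group G" and "\<chi> \<in> gchars G" "\<psi> \<in> gchars G"
  shows "restrict (\<lambda>a. \<psi> a * \<chi> a) (carrier G) \<in> gchars G"
proof -
  interpret comm_group G by (rule cg)
  show ?thesis using assms unfolding gchars_def by (auto simp: norm_mult)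
qed

lemma cnj_mult_unit: "cmod z = 1 \<Longrightarrow> cnj z * z = 1"
  using complex_norm_square[of z] by (simp add: mult.commute)

lemma sum_chars_at:
  fixes G :: "'g monoid" (structure)
  assumes cg: "comm_group G" and fin: "finite (carrier G)" and y: "y \<in> carrier G"
  shows "(\<Sum>\<chi>\<in>gchars G. \<chi> y) = (if y = \<one> then of_nat (card (gchars G)) else 0)"
proof -
  interpret comm_group G by (rule cg)
  show ?thesis
  proof (cases "y = \<one>")
    case True
    have "(\<Sum>\<chi>\<in>gchars G. \<chi> y) = (\<Sum>\<chi>\<in>gchars G. 1)" using gchars_one[OF cg] True by (intro sum.cong) auto
    then show ?thesis using True by simp
  next
    case False
    obtain \<psi> where \<psi>: "\<psi> \<in> gchars G" "\<psi> y \<noteq> 1" using chr_sep[OF cg fin y False] by blast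
    have \<psi>c: "cnj (\<psi> a) * \<psi> a = 1" if "a \<in> carrier G" for a
      using \<psi>(1) that by (intro cnj_mult_unit) (auto simp: gchars_def)
    have cnjc: "restrict (\<lambda>a. cnj (\<psi> a)) (carrier G) \<in> gchars G"
      using \<psi>(1) unfolding gchars_def by auto
    have "(\<Sum>\<chi>\<in>gchars G. \<psi> y * \<chi> y) = (\<Sum>\<chi>\<in>gchars G. \<chi> y)"
    proof (rule sum.reindex_bij_witness[of _ "\<lambda>\<chi>. restrict (\<lambda>a. cnj (\<psi> a) * \<chi> a) (carrier G)"
          "\<lambda>\<chi>. restrict (\<lambda>a. \<psi> a * \<chi> a) (carrier G)"])
      fix \<chi> assume c: "\<chi> \<in> gchars G"
      then have ext: "\<chi> \<in> extensional (carrier G)" unfolding gchars_def by auto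
      have e1: "cnj (\<psi> a) * (\<psi> a * \<chi> a) = \<chi> a" if "a \<in> carrier G" for a
      proof -
        have "cnj (\<psi> a) * (\<psi> a * \<chi> a) = (cnj (\<psi> a) * \<psi> a) * \<chi> a" by (simp only: ac_simps)
        then show ?thesis using \<psi>c[OF that] by simp
      qed
      have e2: "\<psi> a * (cnj (\<psi> a) * \<chi> a) = \<chi> a" if "a \<in> carrier G" for a
      proof -
        have "\<psi> a * (cnj (\<psi> a) * \<chi> a) = (cnj (\<psi> a) * \<psi> a) * \<chi> a" by (simp only: ac_simps)
        then show ?thesis using \<psi>c[OF that] by simp
      qed
      show "restrict (\<lambda>a. cnj (\<psi> a) * restrict (\<lambda>a. \<psi> a * \<chi> a) (carrier G) a) (carrier G) = \<chi>"
        by (rule extensionalityI[OF _ ext]) (simp_all add: e1)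
      show "restrict (\<lambda>a. \<psi> a * restrict (\<lambda>a. cnj (\<psi> a) * \<chi> a) (carrier G) a) (carrier G) = \<chi>"
        by (rule extensionalityI[OF _ ext]) (simp_all add: e2)
      show "restrict (\<lambda>a. \<psi> a * \<chi> a) (carrier G) \<in> gchars G" using gchars_mult[OF cg c \<psi>(1)] .
      show "restrict (\<lambda>a. cnj (\<psi> a) * \<chi> a) (carrier G) \<in> gchars G"
      proof -
        have "restrict (\<lambda>a. restrict (\<lambda>a. cnj (\<psi> a)) (carrier G) a * \<chi> a) (carrier G) = restrict (\<lambda>a. cnj (\<psi> a) * \<chi> a) (carrier G)"
          by (rule restrict_ext) simp
        then show ?thesis using gchars_mult[OF cg c cnjc] by simp
      qed
      show "restrict (\<lambda>a. \<psi> a * \<chi> a) (carrier G) y = \<psi> y * \<chi> y" using y by simp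
    qed
    then have "\<psi> y * (\<Sum>\<chi>\<in>gchars G. \<chi> y) = (\<Sum>\<chi>\<in>gchars G. \<chi> y)" by (simp add: sum_distrib_left)
    then have "(\<psi> y - 1) * (\<Sum>\<chi>\<in>gchars G. \<chi> y) = 0" by (simp add: algebra_simps)
    then show ?thesis using \<psi>(2) False by simp
  qed
qed

lemma sum_elems:
  fixes G :: "'g monoid" (structure)
  assumes cg: "comm_group G" and fin: "finite (carrier G)" and c: "\<chi> \<in> gchars G"
  shows "(\<Sum>a\<in>carrier G. \<chi> a) = (if \<chi> = restrict (\<lambda>_. 1) (carrier G) then of_nat (card (carrier G)) else 0)"
proof -
  interpret comm_group G by (rule cg)
  show ?thesis
  proof (cases "\<chi> = restrict (\<lambda>_. 1) (carrier G)")
    case True then show ?thesis by simp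
  next
    case False
    have ext: "\<chi> \<in> extensional (carrier G)" using c unfolding gchars_def by auto
    obtain a0 where a0: "a0 \<in> carrier G" "\<chi> a0 \<noteq> 1"
      using False extensionalityI[OF ext, of "restrict (\<lambda>_. 1) (carrier G)"] by auto
    have cm: "\<chi> (a \<otimes> b) = \<chi> a * \<chi> b" if "a \<in> carrier G" "b \<in> carrier G" for a b
      using c that unfolding gchars_def by auto
    have "(\<Sum>a\<in>carrier G. \<chi> a0 * \<chi> a) = (\<Sum>a\<in>carrier G. \<chi> a)"
    proof (rule sum.reindex_bij_witness[of _ "\<lambda>b. inv a0 \<otimes> b" "\<lambda>a. a0 \<otimes> a"])
      fix a assume a: "a \<in> carrier G"
      show "inv a0 \<otimes> (a0 \<otimes> a) = a" using a a0 by (simp add: m_assoc[symmetric])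
      show "a0 \<otimes> (inv a0 \<otimes> a) = a" using a a0 by (simp add: m_assoc[symmetric])
      show "a0 \<otimes> a \<in> carrier G" "inv a0 \<otimes> a \<in> carrier G" using a a0 by auto
      show "\<chi> (a0 \<otimes> a) = \<chi> a0 * \<chi> a" using cm a a0 by simp
    qed
    then have "\<chi> a0 * (\<Sum>a\<in>carrier G. \<chi> a) = (\<Sum>a\<in>carrier G. \<chi> a)" by (simp add: sum_distrib_left)
    then have "(\<chi> a0 - 1) * (\<Sum>a\<in>carrier G. \<chi> a) = 0" by (simp add: algebra_simps)
    then show ?thesis using a0 False by simp
  qed
qed

lemma card_gchars:
  fixes G :: "'g monoid" (structure)
  assumes cg: "comm_group G" and fin: "finite (carrier G)"
  shows "card (gchars G) = card (carrier G)"
proof -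
  interpret comm_group G by (rule cg)
  have fc: "finite (gchars G)" using gchars_finite[OF cg fin] .
  have triv: "restrict (\<lambda>_. 1) (carrier G) \<in> gchars G" unfolding gchars_def by auto
  have "(\<Sum>\<chi>\<in>gchars G. \<Sum>a\<in>carrier G. \<chi> a) =
        (\<Sum>\<chi>\<in>gchars G. if \<chi> = restrict (\<lambda>_. 1) (carrier G) then (of_nat (card (carrier G)) :: complex) else 0)"
    using sum_elems[OF cg fin] by (intro sum.cong) auto
  also have "\<dots> = of_nat (card (carrier G))" using fc triv by (simp add: sum.delta')
  finally have 1: "(\<Sum>\<chi>\<in>gchars G. \<Sum>a\<in>carrier G. \<chi> a) = of_nat (card (carrier G))" .
  have "(\<Sum>a\<in>carrier G. \<Sum>\<chi>\<in>gchars G. \<chi> a) =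
        (\<Sum>a\<in>carrier G. if a = \<one> then (of_nat (card (gchars G)) :: complex) else 0)"
    using sum_chars_at[OF cg fin] by (intro sum.cong) auto
  also have "\<dots> = of_nat (card (gchars G))" using fin by (simp add: sum.delta')
  finally have 2: "(\<Sum>a\<in>carrier G. \<Sum>\<chi>\<in>gchars G. \<chi> a) = of_nat (card (gchars G))" .
  have "(of_nat (card (gchars G)) :: complex) = of_nat (card (carrier G))"
    using 1 2 sum.swap[of "\<lambda>\<chi> a. \<chi> a" "carrier G" "gchars G"] by simp
  then show ?thesis by (simp only: of_nat_eq_iff)
qed

lemma chars_delta:
  fixes G :: "'g monoid" (structure)
  assumes cg: "comm_group G" and fin: "finite (carrier G)" and y: "y \<in> carrier G"
  shows "(1 / of_nat (card (carrier G))) * (\<Sum>\<chi>\<in>gchars G. \<chi> y) = (if y = \<one> then 1 else 0)"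
proof -
  interpret comm_group G by (rule cg)
  have "card (carrier G) > 0" using fin one_closed card_gt_0_iff by blast
  then show ?thesis using sum_chars_at[OF cg fin y] card_gchars[OF cg fin] by simp
qed



definition famone :: "(int \<Rightarrow> 'c set) \<Rightarrow> (int \<Rightarrow> 'g monoid) \<Rightarrow> int \<Rightarrow> ('c,'g) fam" where
  "famone K G p = (\<lambda>n y. if y \<in> K n then \<one>\<^bsub>G (n - p)\<^esub> else undefined)"

definition faminv :: "(int \<Rightarrow> 'c set) \<Rightarrow> (int \<Rightarrow> 'g monoid) \<Rightarrow> int \<Rightarrow> ('c,'g) fam \<Rightarrow> ('c,'g) fam" where
  "faminv K G p f = (\<lambda>n y. if y \<in> K n then inv\<^bsub>G (n - p)\<^esub> (f n y) else undefined)"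

definition famgrp :: "(int \<Rightarrow> 'c set) \<Rightarrow> (int \<Rightarrow> 'g monoid) \<Rightarrow> int \<Rightarrow> ('c,'g) fam monoid" where
  "famgrp K G p = \<lparr>carrier = homsup K G p, monoid.mult = fam_add K G p, one = famone K G p\<rparr>"

locale psetup =
  fixes K :: "int \<Rightarrow> 'c set" and dC :: "int \<Rightarrow> 'c \<Rightarrow> 'c \<Rightarrow> int"
    and G :: "int \<Rightarrow> 'g monoid" and dG :: "int \<Rightarrow> 'g \<Rightarrow> 'g"
  assumes finK: "\<And>n. finite (K n)"
    and finsupp: "finite {n. K n \<noteq> {}}"
    and grp: "\<And>n. comm_group (G n)"
    and finG: "\<And>n. finite (carrier (G n))"
    and dGhom: "\<And>n. dG n \<in> hom (G n) (G (n - 1))"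
begin

lemma Gmc [simp]: "a \<in> carrier (G n) \<Longrightarrow> b \<in> carrier (G n) \<Longrightarrow> a \<otimes>\<^bsub>G n\<^esub> b \<in> carrier (G n)"
proof - interpret comm_group "G n" by (rule grp) show "a \<in> carrier (G n) \<Longrightarrow> b \<in> carrier (G n) \<Longrightarrow> a \<otimes>\<^bsub>G n\<^esub> b \<in> carrier (G n)" by simp qed
lemma Goc [simp]: "\<one>\<^bsub>G n\<^esub> \<in> carrier (G n)"
proof - interpret comm_group "G n" by (rule grp) show ?thesis by simp qed
lemma Gic [simp]: "a \<in> carrier (G n) \<Longrightarrow> inv\<^bsub>G n\<^esub> a \<in> carrier (G n)"
proof - interpret comm_group "G n" by (rule grp) show "a \<in> carrier (G n) \<Longrightarrow> inv\<^bsub>G n\<^esub> a \<in> carrier (G n)" by simp qed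
lemma Glo [simp]: "a \<in> carrier (G n) \<Longrightarrow> \<one>\<^bsub>G n\<^esub> \<otimes>\<^bsub>G n\<^esub> a = a"
proof - interpret comm_group "G n" by (rule grp) show "a \<in> carrier (G n) \<Longrightarrow> \<one>\<^bsub>G n\<^esub> \<otimes>\<^bsub>G n\<^esub> a = a" by simp qed
lemma Gro [simp]: "a \<in> carrier (G n) \<Longrightarrow> a \<otimes>\<^bsub>G n\<^esub> \<one>\<^bsub>G n\<^esub> = a"
proof - interpret comm_group "G n" by (rule grp) show "a \<in> carrier (G n) \<Longrightarrow> a \<otimes>\<^bsub>G n\<^esub> \<one>\<^bsub>G n\<^esub> = a" by simp qed
lemma Gli [simp]: "a \<in> carrier (G n) \<Longrightarrow> inv\<^bsub>G n\<^esub> a \<otimes>\<^bsub>G n\<^esub> a = \<one>\<^bsub>G n\<^esub>"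
proof - interpret comm_group "G n" by (rule grp) show "a \<in> carrier (G n) \<Longrightarrow> inv\<^bsub>G n\<^esub> a \<otimes>\<^bsub>G n\<^esub> a = \<one>\<^bsub>G n\<^esub>" by simp qed
lemma Gassoc: "a \<in> carrier (G n) \<Longrightarrow> b \<in> carrier (G n) \<Longrightarrow> c \<in> carrier (G n) \<Longrightarrow>
    (a \<otimes>\<^bsub>G n\<^esub> b) \<otimes>\<^bsub>G n\<^esub> c = a \<otimes>\<^bsub>G n\<^esub> (b \<otimes>\<^bsub>G n\<^esub> c)"
proof - interpret comm_group "G n" by (rule grp) show "a \<in> carrier (G n) \<Longrightarrow> b \<in> carrier (G n) \<Longrightarrow> c \<in> carrier (G n) \<Longrightarrow>
    (a \<otimes>\<^bsub>G n\<^esub> b) \<otimes>\<^bsub>G n\<^esub> c = a \<otimes>\<^bsub>G n\<^esub> (b \<otimes>\<^bsub>G n\<^esub> c)" by (simp add: m_assoc) qed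
lemma Gcomm: "a \<in> carrier (G n) \<Longrightarrow> b \<in> carrier (G n) \<Longrightarrow> a \<otimes>\<^bsub>G n\<^esub> b = b \<otimes>\<^bsub>G n\<^esub> a"
proof - interpret comm_group "G n" by (rule grp) show "a \<in> carrier (G n) \<Longrightarrow> b \<in> carrier (G n) \<Longrightarrow> a \<otimes>\<^bsub>G n\<^esub> b = b \<otimes>\<^bsub>G n\<^esub> a" by (simp add: m_comm) qed

lemma homsupD: "f \<in> homsup K G p \<Longrightarrow> y \<in> K n \<Longrightarrow> f n y \<in> carrier (G (n - p))"
  unfolding homsup_def by auto
lemma homsupD2: "f \<in> homsup K G p \<Longrightarrow> y \<notin> K n \<Longrightarrow> f n y = undefined"
  unfolding homsup_def by auto
lemma homsupI: "(\<And>n y. y \<in> K n \<Longrightarrow> f n y \<in> carrier (G (n - p))) \<Longrightarrow> (\<And>n y. y \<notin> K n \<Longrightarrow> f n y = undefined)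
   \<Longrightarrow> f \<in> homsup K G p"
  unfolding homsup_def by auto

lemma fam_eqI: "f \<in> homsup K G p \<Longrightarrow> g \<in> homsup K G p \<Longrightarrow> (\<And>n y. y \<in> K n \<Longrightarrow> f n y = g n y) \<Longrightarrow> f = g"
  using homsupD2 by (intro ext) metis

lemma fam_add_closed: "f \<in> homsup K G p \<Longrightarrow> g \<in> homsup K G p \<Longrightarrow> fam_add K G p f g \<in> homsup K G p"
  by (rule homsupI) (auto simp: fam_add_def homsupD)

lemma famone_closed: "famone K G p \<in> homsup K G p"
  by (rule homsupI) (auto simp: famone_def)

lemma faminv_closed: "f \<in> homsup K G p \<Longrightarrow> faminv K G p f \<in> homsup K G p"
  by (rule homsupI) (auto simp: faminv_def homsupD)

lemma fam_add_assoc: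
  assumes "f \<in> homsup K G p" "g \<in> homsup K G p" "h \<in> homsup K G p"
  shows "fam_add K G p (fam_add K G p f g) h = fam_add K G p f (fam_add K G p g h)"
  by (rule fam_eqI[OF fam_add_closed[OF fam_add_closed[OF assms(1,2)] assms(3)]
       fam_add_closed[OF assms(1) fam_add_closed[OF assms(2,3)]]])
     (use assms in \<open>auto simp: fam_add_def homsupD Gassoc\<close>)

lemma fam_add_comm:
  assumes "f \<in> homsup K G p" "g \<in> homsup K G p"
  shows "fam_add K G p f g = fam_add K G p g f"
  by (rule fam_eqI[OF fam_add_closed[OF assms] fam_add_closed[OF assms(2,1)]])
     (use assms in \<open>auto simp: fam_add_def homsupD Gcomm\<close>)

lemma fam_add_one: "f \<in> homsup K G p \<Longrightarrow> fam_add K G p (famone K G p) f = f"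
  by (rule fam_eqI[OF fam_add_closed[OF famone_closed]]) (auto simp: fam_add_def famone_def homsupD)

lemma fam_add_inv: "f \<in> homsup K G p \<Longrightarrow> fam_add K G p (faminv K G p f) f = famone K G p"
  by (rule fam_eqI[OF fam_add_closed[OF faminv_closed] famone_closed]) (auto simp: fam_add_def famone_def faminv_def homsupD)

lemma famgrp_comm: "comm_group (famgrp K G p)"
proof (rule comm_groupI)
  fix x y z assume "x \<in> carrier (famgrp K G p)" "y \<in> carrier (famgrp K G p)" "z \<in> carrier (famgrp K G p)"
  then show "x \<otimes>\<^bsub>famgrp K G p\<^esub> y \<otimes>\<^bsub>famgrp K G p\<^esub> z = x \<otimes>\<^bsub>famgrp K G p\<^esub> (y \<otimes>\<^bsub>famgrp K G p\<^esub> z)"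
    by (simp add: famgrp_def fam_add_assoc)
next
  fix x y assume "x \<in> carrier (famgrp K G p)" "y \<in> carrier (famgrp K G p)"
  then show "x \<otimes>\<^bsub>famgrp K G p\<^esub> y \<in> carrier (famgrp K G p)" "x \<otimes>\<^bsub>famgrp K G p\<^esub> y = y \<otimes>\<^bsub>famgrp K G p\<^esub> x"
    by (simp_all add: famgrp_def fam_add_closed fam_add_comm)
next
  show "\<one>\<^bsub>famgrp K G p\<^esub> \<in> carrier (famgrp K G p)" by (simp add: famgrp_def famone_closed)
next
  fix x assume x: "x \<in> carrier (famgrp K G p)"
  then show "\<one>\<^bsub>famgrp K G p\<^esub> \<otimes>\<^bsub>famgrp K G p\<^esub> x = x"
    by (simp add: famgrp_def fam_add_one)
  show "\<exists>y\<in>carrier (famgrp K G p). y \<otimes>\<^bsub>famgrp K G p\<^esub> x = \<one>\<^bsub>famgrp K G p\<^esub>"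
    using x by (auto simp: famgrp_def fam_add_inv intro!: bexI[of _ "faminv K G p x"] faminv_closed)
qed

lemma gchars_famgrp: "gchars (famgrp K G p) = homsub K G p"
  unfolding gchars_def homsub_def famgrp_def by simp

lemma finite_homsup: "finite (homsup K G p)"
proof -
  define S where "S = Sigma {n. K n \<noteq> {}} K"
  have fS: "finite S" unfolding S_def using finsupp finK by (intro finite_SigmaI) auto
  have "homsup K G p \<subseteq> (\<lambda>\<phi> n y. \<phi> (n, y)) ` PiE S (\<lambda>(n, y). carrier (G (n - p)))"
  proof
    fix f assume f: "f \<in> homsup K G p"
    define \<phi> where "\<phi> = restrict (\<lambda>(n, y). f n y) S"
    have "f = (\<lambda>n y. \<phi> (n, y))" using homsupD2[OF f] unfolding \<phi>_def S_def by (auto simp: fun_eq_iff)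
    moreover have "\<phi> \<in> PiE S (\<lambda>(n, y). carrier (G (n - p)))" unfolding \<phi>_def S_def using homsupD[OF f] by auto
    ultimately show "f \<in> (\<lambda>\<phi> n y. \<phi> (n, y)) ` PiE S (\<lambda>(n, y). carrier (G (n - p)))" by blast
  qed
  moreover have "finite (PiE S (\<lambda>(n, y). carrier (G (n - p))))"
    using fS finG by (intro finite_PiE) auto
  ultimately show ?thesis by (meson finite_imageI finite_subset)
qed

lemma cobdry_closed: "f \<in> homsup K G p \<Longrightarrow> cobdry K dC G dG p f \<in> homsup K G (p + 1)"
proof (rule homsupI)
  fix n y assume f: "f \<in> homsup K G p" and y: "y \<in> K n"
  interpret Gn: comm_group "G (n - (p + 1))" by (rule grp)
  have e1: "n - 1 - p = n - (p + 1)" "n - p - 1 = n - (p + 1)" by simp_all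
  have "(\<lambda>z. f (n - 1) z [^]\<^bsub>G (n - (p + 1))\<^esub> dC n y z) \<in> K (n - 1) \<rightarrow> carrier (G (n - (p + 1)))"
    using homsupD[OF f, of _ "n - 1"] e1 by (auto intro: Gn.int_pow_closed)
  moreover have "dG (n - p) (f n y) \<in> carrier (G (n - (p + 1)))"
    using hom_in_carrier[OF dGhom[of "n - p"] homsupD[OF f y]] e1 by simp
  ultimately show "cobdry K dC G dG p f n y \<in> carrier (G (n - (p + 1)))"
    unfolding cobdry_def using y by simp
qed (simp add: cobdry_def)

end



context psetup
begin

lemma cobdry_add_m1:
  assumes t1: "t1 \<in> homsup K G (-1)" and t2: "t2 \<in> homsup K G (-1)"
  shows "cobdry K dC G dG (-1) (fam_add K G (-1) t1 t2) =
         fam_add K G 0 (cobdry K dC G dG (-1) t1) (cobdry K dC G dG (-1) t2)"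
proof (intro ext)
  fix n y
  show "cobdry K dC G dG (-1) (fam_add K G (-1) t1 t2) n y =
         fam_add K G 0 (cobdry K dC G dG (-1) t1) (cobdry K dC G dG (-1) t2) n y"
  proof (cases "y \<in> K n")
    case False then show ?thesis by (simp add: cobdry_def fam_add_def)
  next
    case True
    interpret Gn: comm_group "G n" by (rule grp)
    have c1: "t1 (n - 1) z \<in> carrier (G n)" if "z \<in> K (n - 1)" for z using homsupD[OF t1 that] by simp
    have c2: "t2 (n - 1) z \<in> carrier (G n)" if "z \<in> K (n - 1)" for z using homsupD[OF t2 that] by simp
    have d1: "t1 n y \<in> carrier (G (n + 1))" using homsupD[OF t1 True] by simp
    have d2: "t2 n y \<in> carrier (G (n + 1))" using homsupD[OF t2 True] by simp
    have hm: "dG (n + 1) (a \<otimes>\<^bsub>G (n + 1)\<^esub> b) = dG (n + 1) a \<otimes>\<^bsub>G n\<^esub> dG (n + 1) b"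
      if "a \<in> carrier (G (n + 1))" "b \<in> carrier (G (n + 1))" for a b
      using hom_mult[OF dGhom[of "n + 1"] that] by simp
    have dc: "dG (n + 1) a \<in> carrier (G n)" if "a \<in> carrier (G (n + 1))" for a
      using hom_in_carrier[OF dGhom[of "n + 1"] that] by simp
    have cb: "cobdry K dC G dG (-1) t n y = finprod (G n) (\<lambda>z. t (n - 1) z [^]\<^bsub>G n\<^esub> dC n y z) (K (n - 1))
        \<otimes>\<^bsub>G n\<^esub> dG (n + 1) (t n y)" for t
      using True by (simp add: cobdry_def)
    define P1 where "P1 = finprod (G n) (\<lambda>z. t1 (n - 1) z [^]\<^bsub>G n\<^esub> dC n y z) (K (n - 1))"
    define P2 where "P2 = finprod (G n) (\<lambda>z. t2 (n - 1) z [^]\<^bsub>G n\<^esub> dC n y z) (K (n - 1))"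
    have p1: "P1 \<in> carrier (G n)" unfolding P1_def using c1 by (intro Gn.finprod_closed) auto
    have p2: "P2 \<in> carrier (G n)" unfolding P2_def using c2 by (intro Gn.finprod_closed) auto
    have "finprod (G n) (\<lambda>z. fam_add K G (-1) t1 t2 (n - 1) z [^]\<^bsub>G n\<^esub> dC n y z) (K (n - 1)) =
          finprod (G n) (\<lambda>z. t1 (n - 1) z [^]\<^bsub>G n\<^esub> dC n y z \<otimes>\<^bsub>G n\<^esub> t2 (n - 1) z [^]\<^bsub>G n\<^esub> dC n y z) (K (n - 1))"
      by (rule Gn.finprod_cong') (auto simp: fam_add_def c1 c2 Gn.int_pow_distrib)
    also have "\<dots> = P1 \<otimes>\<^bsub>G n\<^esub> P2" unfolding P1_def P2_def
      by (rule Gn.finprod_multf) (auto simp: c1 c2)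
    finally have fp: "finprod (G n) (\<lambda>z. fam_add K G (-1) t1 t2 (n - 1) z [^]\<^bsub>G n\<^esub> dC n y z) (K (n - 1)) =
          P1 \<otimes>\<^bsub>G n\<^esub> P2" .
    have "cobdry K dC G dG (-1) (fam_add K G (-1) t1 t2) n y =
          (P1 \<otimes>\<^bsub>G n\<^esub> P2) \<otimes>\<^bsub>G n\<^esub> (dG (n + 1) (t1 n y) \<otimes>\<^bsub>G n\<^esub> dG (n + 1) (t2 n y))"
      unfolding cb fp using True d1 d2 hm by (simp add: fam_add_def)
    also have "\<dots> = (P1 \<otimes>\<^bsub>G n\<^esub> dG (n + 1) (t1 n y)) \<otimes>\<^bsub>G n\<^esub> (P2 \<otimes>\<^bsub>G n\<^esub> dG (n + 1) (t2 n y))"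
      using p1 p2 dc[OF d1] dc[OF d2] by (simp add: Gn.m_ac)
    also have "\<dots> = fam_add K G 0 (cobdry K dC G dG (-1) t1) (cobdry K dC G dG (-1) t2) n y"
      unfolding fam_add_def using True by (simp add: cb P1_def P2_def)
    finally show ?thesis .
  qed
qed

lemma cobdry_m1_closed: "t \<in> homsup K G (-1) \<Longrightarrow> cobdry K dC G dG (-1) t \<in> homsup K G 0"
  using cobdry_closed[of t "-1"] by simp

lemma cobdry_0_closed: "t \<in> homsup K G 0 \<Longrightarrow> cobdry K dC G dG 0 t \<in> homsup K G 1"
  using cobdry_closed[of t 0] by simp

lemma opA_mult:
  assumes t1: "t1 \<in> homsup K G (-1)" and t2: "t2 \<in> homsup K G (-1)"
    and a: "a \<in> homsup K G 0" and b: "b \<in> homsup K G 0"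
  shows "(\<Sum>c\<in>homsup K G 0. opA K dC G dG t1 a c * opA K dC G dG t2 c b) = opA K dC G dG (fam_add K G (-1) t1 t2) a b"
proof -
  define u1 where "u1 = cobdry K dC G dG (-1) t1"
  define u2 where "u2 = cobdry K dC G dG (-1) t2"
  have u1: "u1 \<in> homsup K G 0" unfolding u1_def by (rule cobdry_m1_closed[OF t1])
  have u2: "u2 \<in> homsup K G 0" unfolding u2_def by (rule cobdry_m1_closed[OF t2])
  define w where "w = fam_add K G 0 b u2"
  have w: "w \<in> homsup K G 0" unfolding w_def by (rule fam_add_closed[OF b u2])
  have "(\<Sum>c\<in>homsup K G 0. opA K dC G dG t1 a c * opA K dC G dG t2 c b) =
        (\<Sum>c\<in>homsup K G 0. if c = w then (if a = fam_add K G 0 w u1 then 1 else 0) else 0)"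
    by (rule sum.cong) (auto simp: opA_def opP_def u1_def u2_def w_def)
  also have "\<dots> = (if a = fam_add K G 0 w u1 then 1 else 0)"
    using w finite_homsup by simp
  also have "fam_add K G 0 w u1 = fam_add K G 0 b (fam_add K G 0 u1 u2)"
    unfolding w_def using b u1 u2 by (simp add: fam_add_assoc fam_add_comm[of u1 0 u2])
  also have "fam_add K G 0 u1 u2 = cobdry K dC G dG (-1) (fam_add K G (-1) t1 t2)"
    unfolding u1_def u2_def using cobdry_add_m1[OF t1 t2] by simp
  finally show ?thesis by (simp add: opA_def opP_def)
qed

lemma homsub_mult: "s \<in> homsub K G p \<Longrightarrow> f \<in> homsup K G p \<Longrightarrow> g \<in> homsup K G p \<Longrightarrow>
    s (fam_add K G p f g) = s f * s g"
  unfolding homsub_def by auto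

lemma costar_closed: "x \<in> K n \<Longrightarrow> h \<in> carrier (G (n + 1)) \<Longrightarrow> costar K G (-1) n x h \<in> homsup K G (-1)"
  by (rule homsupI) (auto simp: costar_def)

lemma cobdry_one: "cobdry K dC G dG (-1) (famone K G (-1)) = famone K G 0"
proof -
  interpret F: comm_group "famgrp K G 0" by (rule famgrp_comm)
  define e where "e = cobdry K dC G dG (-1) (famone K G (-1))"
  have e: "e \<in> homsup K G 0" unfolding e_def by (rule cobdry_m1_closed[OF famone_closed])
  have "fam_add K G (-1) (famone K G (-1)) (famone K G (-1)) = famone K G (-1)"
    by (rule fam_add_one[OF famone_closed])
  then have "fam_add K G 0 e e = e" unfolding e_def using cobdry_add_m1[OF famone_closed famone_closed] by simp
  then have "e \<otimes>\<^bsub>famgrp K G 0\<^esub> e = e" by (simp add: famgrp_def)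
  moreover have ec: "e \<in> carrier (famgrp K G 0)" using e by (simp add: famgrp_def)
  ultimately have "e = \<one>\<^bsub>famgrp K G 0\<^esub>" using F.r_cancel_one[OF ec ec] by simp
  then show ?thesis unfolding e_def by (simp add: famgrp_def)
qed

end



lemma diag_prod:
  assumes fB: "finite B"
    and diag: "\<And>n x a b. (n, x) \<in> set xs \<Longrightarrow> a \<in> B \<Longrightarrow> b \<in> B \<Longrightarrow> F n x a b = (if a = b then \<phi> n x b else 0)"
    and a: "a \<in> B" and b: "b \<in> B"
  shows "mat_prod_list B (map (\<lambda>(n, x). F n x) xs) a b =
         (if a = b then prod_list (map (\<lambda>(n, x). \<phi> n x b) xs) else 0)"
  using diag a
proof (induct xs arbitrary: a)
  case Nil then show ?case by (simp add: mat_prod_list_def mat_one_def)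
next
  case (Cons p xs)
  obtain n x where p: "p = (n, x)" by (cases p)
  have IH: "mat_prod_list B (map (\<lambda>(n, x). F n x) xs) c b =
         (if c = b then prod_list (map (\<lambda>(n, x). \<phi> n x b) xs) else 0)" if "c \<in> B" for c
    using Cons(1)[OF _ that] Cons(2) by auto
  have "mat_prod_list B (map (\<lambda>(n, x). F n x) (p # xs)) a b =
        (\<Sum>c\<in>B. F n x a c * mat_prod_list B (map (\<lambda>(n, x). F n x) xs) c b)"
    by (simp add: p mat_prod_list_def mat_mult_def)
  also have "\<dots> = (\<Sum>c\<in>B. if a = c then \<phi> n x a * (if a = b then prod_list (map (\<lambda>(n, x). \<phi> n x b) xs) else 0) else 0)"
    by (rule sum.cong) (use Cons(2)[of n x a] Cons(3) IH p in auto)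
  also have "\<dots> = \<phi> n x a * (if a = b then prod_list (map (\<lambda>(n, x). \<phi> n x b) xs) else 0)"
    using Cons(3) fB by simp
  finally show ?case by (simp add: p)
qed

lemma prod01:
  "prod_list (map (\<lambda>(n, x). if P n x then 1 else 0) xs) = (if \<forall>(n, x)\<in>set xs. P n x then 1 else (0::complex))"
  by (induct xs) auto

definition Tset :: "(int \<Rightarrow> 'c set) \<Rightarrow> (int \<Rightarrow> 'g monoid) \<Rightarrow> (int \<times> 'c) list \<Rightarrow> ('c,'g) fam set" where
  "Tset K G xs = {t \<in> homsup K G (-1). \<forall>n y. y \<in> K n \<longrightarrow> (n, y) \<notin> set xs \<longrightarrow> t n y = \<one>\<^bsub>G (n + 1)\<^esub>}"

context psetup
begin

lemma opB_eq: "opB K dC G dG m a b = (if a = b then m (cobdry K dC G dG 0 b) else 0)"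
  by (simp add: opB_def opQ_def)

lemma bigB_eq:
  assumes v: "v \<in> homsup K G 1" and a: "a \<in> homsup K G 0" and b: "b \<in> homsup K G 0"
  shows "bigB K dC G dG v a b = (if a = b \<and> fam_add K G 1 v (cobdry K dC G dG 0 b) = famone K G 1 then 1 else 0)"
proof (cases "a = b")
  case False then show ?thesis by (simp add: bigB_def opB_eq)
next
  case True
  have db: "cobdry K dC G dG 0 b \<in> homsup K G 1" by (rule cobdry_0_closed[OF b])
  define y where "y = fam_add K G 1 v (cobdry K dC G dG 0 b)"
  have y: "y \<in> carrier (famgrp K G 1)" unfolding y_def famgrp_def using fam_add_closed[OF v db] by simp
  have "bigB K dC G dG v a b = (1 / of_nat (card (homsub K G 1))) * (\<Sum>m\<in>homsub K G 1. m y)"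
    unfolding bigB_def opB_eq y_def using True homsub_mult[OF _ v db] by (simp cong: sum.cong)
  also have "\<dots> = (1 / of_nat (card (carrier (famgrp K G 1)))) * (\<Sum>m\<in>gchars (famgrp K G 1). m y)"
  proof -
    have fc: "finite (carrier (famgrp K G 1))" by (simp add: famgrp_def finite_homsup)
    have "card (homsub K G 1) = card (carrier (famgrp K G 1))"
      using card_gchars[OF famgrp_comm fc] by (simp only: gchars_famgrp)
    then show ?thesis by (simp only: gchars_famgrp)
  qed
  also have "\<dots> = (if y = \<one>\<^bsub>famgrp K G 1\<^esub> then 1 else 0)"
    by (rule chars_delta[OF famgrp_comm _ y]) (simp add: famgrp_def finite_homsup)
  finally show ?thesis using True by (simp add: y_def famgrp_def)
qed

lemma locB_eq:
  assumes x: "x \<in> K n" and g: "g \<in> carrier (G (n - 1))" and a: "a \<in> homsup K G 0" and b: "b \<in> homsup K G 0"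
  shows "locB K dC G dG n x g a b =
     (if a = b \<and> g \<otimes>\<^bsub>G (n - 1)\<^esub> cobdry K dC G dG 0 b n x = \<one>\<^bsub>G (n - 1)\<^esub> then 1 else 0)"
proof (cases "a = b")
  case False then show ?thesis by (simp add: locB_def opB_eq)
next
  case True
  have db: "cobdry K dC G dG 0 b \<in> homsup K G 1" by (rule cobdry_0_closed[OF b])
  have dbx: "cobdry K dC G dG 0 b n x \<in> carrier (G (n - 1))" using homsupD[OF db x] .
  define y where "y = g \<otimes>\<^bsub>G (n - 1)\<^esub> cobdry K dC G dG 0 b n x"
  have y: "y \<in> carrier (G (n - 1))" unfolding y_def using g dbx by simp
  have "locB K dC G dG n x g a b = (1 / of_nat (card (carrier (G (n - 1))))) * (\<Sum>r\<in>gchars (G (n - 1)). r y)"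
    unfolding locB_def opB_eq True using db g dbx
    by (intro arg_cong2[where f="(*)"] refl sum.cong) (auto simp: pushch_def gchars_def y_def)
  also have "\<dots> = (if y = \<one>\<^bsub>G (n - 1)\<^esub> then 1 else 0)"
    by (rule chars_delta[OF grp finG y])
  finally show ?thesis using True by (simp add: y_def)
qed

lemma famone1_iff:
  assumes "f \<in> homsup K G 1"
  shows "f = famone K G 1 \<longleftrightarrow> (\<forall>(n, x)\<in>Sigma UNIV K. f n x = \<one>\<^bsub>G (n - 1)\<^esub>)"
proof
  assume "f = famone K G 1" then show "\<forall>(n, x)\<in>Sigma UNIV K. f n x = \<one>\<^bsub>G (n - 1)\<^esub>"
    by (auto simp: famone_def)
next
  assume h: "\<forall>(n, x)\<in>Sigma UNIV K. f n x = \<one>\<^bsub>G (n - 1)\<^esub>"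
  show "f = famone K G 1" by (rule fam_eqI[OF assms famone_closed]) (use h in \<open>auto simp: famone_def\<close>)
qed

theorem partB:
  assumes v: "v \<in> homsup K G 1" and xs: "set xs = Sigma UNIV K"
    and a: "a \<in> homsup K G 0" and b: "b \<in> homsup K G 0"
  shows "bigB K dC G dG v a b =
         mat_prod_list (homsup K G 0) (map (\<lambda>(n, x). locB K dC G dG n x (v n x)) xs) a b"
proof -
  define \<phi> where "\<phi> = (\<lambda>n x b. if v n x \<otimes>\<^bsub>G (n - 1)\<^esub> cobdry K dC G dG 0 b n x = \<one>\<^bsub>G (n - 1)\<^esub> then 1 else (0::complex))"
  have "mat_prod_list (homsup K G 0) (map (\<lambda>(n, x). locB K dC G dG n x (v n x)) xs) a b =
        (if a = b then prod_list (map (\<lambda>(n, x). \<phi> n x b) xs) else 0)"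
  proof (rule diag_prod[OF finite_homsup _ a b])
    fix n x a' b' assume nx: "(n, x) \<in> set xs" and a': "a' \<in> homsup K G 0" and b': "b' \<in> homsup K G 0"
    have x: "x \<in> K n" using nx xs by auto
    show "locB K dC G dG n x (v n x) a' b' = (if a' = b' then \<phi> n x b' else 0)"
      using locB_eq[OF x homsupD[OF v x] a' b'] by (simp add: \<phi>_def)
  qed
  also have "\<dots> = (if a = b \<and> (\<forall>(n, x)\<in>set xs. v n x \<otimes>\<^bsub>G (n - 1)\<^esub> cobdry K dC G dG 0 b n x = \<one>\<^bsub>G (n - 1)\<^esub>) then 1 else 0)"
    unfolding \<phi>_def prod01 by simp
  also have "\<dots> = bigB K dC G dG v a b"
  proof -
    have db: "cobdry K dC G dG 0 b \<in> homsup K G 1" by (rule cobdry_0_closed[OF b])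
    have "(\<forall>(n, x)\<in>set xs. v n x \<otimes>\<^bsub>G (n - 1)\<^esub> cobdry K dC G dG 0 b n x = \<one>\<^bsub>G (n - 1)\<^esub>) \<longleftrightarrow>
          fam_add K G 1 v (cobdry K dC G dG 0 b) = famone K G 1"
      unfolding famone1_iff[OF fam_add_closed[OF v db]] xs by (auto simp: fam_add_def)
    then show ?thesis using bigB_eq[OF v a b] by simp
  qed
  finally show ?thesis by simp
qed

end



context psetup
begin

lemma phi_apply:
  assumes t: "t \<in> homsup K G (-1)" and x: "x \<in> K n" and h: "h \<in> carrier (G (n + 1))"
  shows "fam_add K G (-1) (costar K G (-1) n x h) t k y =
     (if y \<in> K k then (if k = n \<and> y = x then h \<otimes>\<^bsub>G (n + 1)\<^esub> t n x else t k y) else undefined)"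
  using homsupD[OF t, of y k] by (auto simp: fam_add_def costar_def)

lemma Tset_sub: "Tset K G xs \<subseteq> homsup K G (-1)"
  unfolding Tset_def by auto

lemma Tset_finite: "finite (Tset K G xs)"
  using finite_subset[OF Tset_sub finite_homsup] .

lemma Tset_nil: "Tset K G [] = {famone K G (-1)}"
proof
  show "Tset K G [] \<subseteq> {famone K G (-1)}"
  proof
    fix t assume t: "t \<in> Tset K G []"
    then have "t = famone K G (-1)"
      by (intro fam_eqI[of _ "-1"] famone_closed) (auto simp: Tset_def famone_def)
    then show "t \<in> {famone K G (-1)}" by simp
  qed
  show "{famone K G (-1)} \<subseteq> Tset K G []"
    using famone_closed[of "-1"] by (auto simp: Tset_def famone_def)
qed

lemma Tset_all: "set xs = Sigma UNIV K \<Longrightarrow> Tset K G xs = homsup K G (-1)"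
  unfolding Tset_def by auto

lemma Tset_inv_mem:
  assumes x: "x \<in> K n" and t': "t' \<in> Tset K G ((n, x) # xs)"
  shows "(\<lambda>k y. if k = n \<and> y = x then \<one>\<^bsub>G (n + 1)\<^esub> else t' k y) \<in> Tset K G xs"
proof -
  have t'h: "t' \<in> homsup K G (-1)" using t' Tset_sub by blast
  have "(\<lambda>k y. if k = n \<and> y = x then \<one>\<^bsub>G (n + 1)\<^esub> else t' k y) \<in> homsup K G (-1)"
  proof (rule homsupI)
    fix k y assume "y \<in> K k" then show "(if k = n \<and> y = x then \<one>\<^bsub>G (n + 1)\<^esub> else t' k y) \<in> carrier (G (k - - 1))"
      using homsupD[OF t'h] by auto
  next
    fix k y assume "y \<notin> K k" then show "(if k = n \<and> y = x then \<one>\<^bsub>G (n + 1)\<^esub> else t' k y) = undefined"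
      using homsupD2[OF t'h] x by auto
  qed
  then show ?thesis using t' unfolding Tset_def by auto
qed

lemma Tset_cons_bij:
  assumes x: "x \<in> K n" and nx: "(n, x) \<notin> set xs"
  shows "bij_betw (\<lambda>(h, t). fam_add K G (-1) (costar K G (-1) n x h) t)
           (carrier (G (n + 1)) \<times> Tset K G xs) (Tset K G ((n, x) # xs))"
proof (rule bij_betwI[where g = "\<lambda>t'. (t' n x, \<lambda>k y. if k = n \<and> y = x then \<one>\<^bsub>G (n + 1)\<^esub> else t' k y)"])
  show "(\<lambda>(h, t). fam_add K G (-1) (costar K G (-1) n x h) t) \<in> carrier (G (n + 1)) \<times> Tset K G xs \<rightarrow> Tset K G ((n, x) # xs)"
  proof
    fix p assume "p \<in> carrier (G (n + 1)) \<times> Tset K G xs"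
    then obtain h t where p: "p = (h, t)" and h: "h \<in> carrier (G (n + 1))" and t: "t \<in> Tset K G xs" by blast
    have th: "t \<in> homsup K G (-1)" using t Tset_sub by blast
    have "fam_add K G (-1) (costar K G (-1) n x h) t \<in> homsup K G (-1)"
      by (rule fam_add_closed[OF costar_closed[OF x h] th])
    then show "(case p of (h, t) \<Rightarrow> fam_add K G (-1) (costar K G (-1) n x h) t) \<in> Tset K G ((n, x) # xs)"
      using t unfolding p Tset_def by (auto simp: phi_apply[OF th x h])
  qed
  show "(\<lambda>t'. (t' n x, \<lambda>k y. if k = n \<and> y = x then \<one>\<^bsub>G (n + 1)\<^esub> else t' k y)) \<in> Tset K G ((n, x) # xs) \<rightarrow> carrier (G (n + 1)) \<times> Tset K G xs"
  proof
    fix t' assume t': "t' \<in> Tset K G ((n, x) # xs)"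
    have "t' n x \<in> carrier (G (n + 1))" using homsupD[OF _ x, of t' "-1"] t' Tset_sub by auto
    then show "(t' n x, \<lambda>k y. if k = n \<and> y = x then \<one>\<^bsub>G (n + 1)\<^esub> else t' k y) \<in> carrier (G (n + 1)) \<times> Tset K G xs"
      using Tset_inv_mem[OF x t'] by blast
  qed
  fix p assume "p \<in> carrier (G (n + 1)) \<times> Tset K G xs"
  then obtain h t where p: "p = (h, t)" and h: "h \<in> carrier (G (n + 1))" and t: "t \<in> Tset K G xs" by blast
  have th: "t \<in> homsup K G (-1)" using t Tset_sub by blast
  have tnx: "t n x = \<one>\<^bsub>G (n + 1)\<^esub>" using t x nx unfolding Tset_def by auto
  have "(\<lambda>k y. if k = n \<and> y = x then \<one>\<^bsub>G (n + 1)\<^esub> else fam_add K G (-1) (costar K G (-1) n x h) t k y) = t"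
    using tnx homsupD2[OF th] by (auto simp: fun_eq_iff phi_apply[OF th x h])
  moreover have "fam_add K G (-1) (costar K G (-1) n x h) t n x = h"
    using tnx h x by (simp add: phi_apply[OF th x h])
  ultimately show "(\<lambda>t'. (t' n x, \<lambda>k y. if k = n \<and> y = x then \<one>\<^bsub>G (n + 1)\<^esub> else t' k y))
      ((\<lambda>(h, t). fam_add K G (-1) (costar K G (-1) n x h) t) p) = p"
    unfolding p prod.case by simp
next
  fix t' assume t': "t' \<in> Tset K G ((n, x) # xs)"
  have t'h: "t' \<in> homsup K G (-1)" using t' Tset_sub by blast
  define t where "t = (\<lambda>k y. if k = n \<and> y = x then \<one>\<^bsub>G (n + 1)\<^esub> else t' k y)"
  have th: "t \<in> homsup K G (-1)" using Tset_inv_mem[OF x t'] Tset_sub unfolding t_def by blast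
  have h: "t' n x \<in> carrier (G (n + 1))" using homsupD[OF t'h x] by simp
  have "fam_add K G (-1) (costar K G (-1) n x (t' n x)) t = t'"
  proof -
    have tv: "t k y = (if k = n \<and> y = x then \<one>\<^bsub>G (n + 1)\<^esub> else t' k y)" for k y by (simp add: t_def)
    show ?thesis using homsupD2[OF t'h] h by (auto simp: fun_eq_iff phi_apply[OF th x h] tv)
  qed
  then show "(\<lambda>(h, t). fam_add K G (-1) (costar K G (-1) n x h) t)
      ((\<lambda>t'. (t' n x, \<lambda>k y. if k = n \<and> y = x then \<one>\<^bsub>G (n + 1)\<^esub> else t' k y)) t') = t'"
    unfolding t_def by simp
qed

end



context psetup
begin

lemma s_one: "s \<in> homsub K G (-1) \<Longrightarrow> s (famone K G (-1)) = 1"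
proof -
  assume "s \<in> homsub K G (-1)"
  then have "s \<in> gchars (famgrp K G (-1))" by (simp only: gchars_famgrp)
  from gchars_one[OF famgrp_comm this] show ?thesis by (simp add: famgrp_def)
qed

lemma A_ind:
  assumes s: "s \<in> homsub K G (-1)"
  shows "distinct xs \<Longrightarrow> set xs \<subseteq> Sigma UNIV K \<Longrightarrow> a \<in> homsup K G 0 \<Longrightarrow> b \<in> homsup K G 0 \<Longrightarrow>
    mat_prod_list (homsup K G 0) (map (\<lambda>(n, x). locA K dC G dG n x (s_comp K G s n x)) xs) a b =
    (1 / of_nat (card (Tset K G xs))) * (\<Sum>t\<in>Tset K G xs. s t * opA K dC G dG t a b)"
proof (induct xs arbitrary: a)
  case Nil
  have "fam_add K G 0 b (famone K G 0) = b"
    using fam_add_one[OF Nil(4)] fam_add_comm[OF Nil(4) famone_closed] by simp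
  then have op1: "opA K dC G dG (famone K G (-1)) a b = (if a = b then 1 else 0)"
    by (simp add: opA_def opP_def cobdry_one)
  show ?case using Tset_nil by (simp add: mat_prod_list_def mat_one_def s_one[OF s] op1)
next
  case (Cons p xs)
  obtain n x where p: "p = (n, x)" by (cases p)
  have nx: "(n, x) \<notin> set xs" "distinct xs" using Cons(2) p by auto
  have x: "x \<in> K n" and xsK: "set xs \<subseteq> Sigma UNIV K" using Cons(3) p by auto
  have a: "a \<in> homsup K G 0" and b: "b \<in> homsup K G 0" using Cons(4,5) .
  define B0 where "B0 = homsup K G 0"
  define Gc where "Gc = carrier (G (n + 1))"
  define T where "T = Tset K G xs"
  define r where "r = s_comp K G s n x"
  define \<phi> where "\<phi> = (\<lambda>(h, t). fam_add K G (-1) (costar K G (-1) n x h) t)"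
  define P where "P = mat_prod_list B0 (map (\<lambda>(n, x). locA K dC G dG n x (s_comp K G s n x)) xs)"
  have fB0: "finite B0" unfolding B0_def by (rule finite_homsup)
  have fGc: "finite Gc" unfolding Gc_def by (rule finG)
  have fT: "finite T" unfolding T_def by (rule Tset_finite)
  have Th: "t \<in> homsup K G (-1)" if "t \<in> T" for t using that Tset_sub unfolding T_def by blast
  have IH: "P c b = (1 / of_nat (card T)) * (\<Sum>t\<in>T. s t * opA K dC G dG t c b)" if "c \<in> B0" for c
    unfolding P_def T_def using Cons(1)[OF nx(2) xsK _ b] that B0_def by simp
  have bij: "bij_betw \<phi> (Gc \<times> T) (Tset K G ((n, x) # xs))"
    unfolding \<phi>_def Gc_def T_def by (rule Tset_cons_bij[OF x nx(1)])
  have cardT': "card (Tset K G ((n, x) # xs)) = card Gc * card T"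
    using bij_betw_same_card[OF bij] by (simp add: card_cartesian_product)
  have rs: "r h * s t = s (\<phi> (h, t))" if "h \<in> Gc" "t \<in> T" for h t
    using homsub_mult[OF s costar_closed[OF x] Th[OF that(2)]] that
    unfolding r_def s_comp_def \<phi>_def Gc_def by simp
  have op: "(\<Sum>c\<in>B0. opA K dC G dG (costar K G (-1) n x h) a c * opA K dC G dG t c b) = opA K dC G dG (\<phi> (h, t)) a b"
    if "h \<in> Gc" "t \<in> T" for h t
    unfolding B0_def \<phi>_def using opA_mult[OF costar_closed[OF x] Th[OF that(2)] a b] that Gc_def by simp
  define \<alpha> where "\<alpha> = (1 / of_nat (card Gc)) * (1 / (of_nat (card T) :: complex))"
  have "mat_prod_list B0 (map (\<lambda>(n, x). locA K dC G dG n x (s_comp K G s n x)) (p # xs)) a b =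
        (\<Sum>c\<in>B0. locA K dC G dG n x r a c * P c b)"
    by (simp add: p mat_prod_list_def mat_mult_def P_def r_def)
  also have "\<dots> = (\<Sum>c\<in>B0. \<alpha> * (\<Sum>h\<in>Gc. \<Sum>t\<in>T. (r h * s t) *
        (opA K dC G dG (costar K G (-1) n x h) a c * opA K dC G dG t c b)))"
  proof (rule sum.cong[OF refl])
    fix c assume c: "c \<in> B0"
    have "locA K dC G dG n x r a c * P c b =
      ((1 / of_nat (card Gc)) * (\<Sum>h\<in>Gc. r h * opA K dC G dG (costar K G (-1) n x h) a c)) *
      ((1 / of_nat (card T)) * (\<Sum>t\<in>T. s t * opA K dC G dG t c b))"
      unfolding IH[OF c] locA_def Gc_def by simp
    also have "\<dots> = \<alpha> * ((\<Sum>h\<in>Gc. r h * opA K dC G dG (costar K G (-1) n x h) a c) *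
      (\<Sum>t\<in>T. s t * opA K dC G dG t c b))" unfolding \<alpha>_def by (simp only: ac_simps)
    also have "\<dots> = \<alpha> * (\<Sum>h\<in>Gc. \<Sum>t\<in>T. (r h * s t) *
        (opA K dC G dG (costar K G (-1) n x h) a c * opA K dC G dG t c b))"
      unfolding sum_product by (simp only: ac_simps)
    finally show "locA K dC G dG n x r a c * P c b = \<alpha> * (\<Sum>h\<in>Gc. \<Sum>t\<in>T. (r h * s t) *
        (opA K dC G dG (costar K G (-1) n x h) a c * opA K dC G dG t c b))" .
  qed
  also have "\<dots> = \<alpha> * (\<Sum>h\<in>Gc. \<Sum>t\<in>T. \<Sum>c\<in>B0. (r h * s t) *
        (opA K dC G dG (costar K G (-1) n x h) a c * opA K dC G dG t c b))"
  proof -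
    define F where "F = (\<lambda>h t c. (r h * s t) *
        (opA K dC G dG (costar K G (-1) n x h) a c * opA K dC G dG t c b))"
    have "(\<Sum>c\<in>B0. \<Sum>h\<in>Gc. \<Sum>t\<in>T. F h t c) = (\<Sum>h\<in>Gc. \<Sum>c\<in>B0. \<Sum>t\<in>T. F h t c)" by (rule sum.swap)
    also have "\<dots> = (\<Sum>h\<in>Gc. \<Sum>t\<in>T. \<Sum>c\<in>B0. F h t c)" by (rule sum.cong[OF refl], rule sum.swap)
    finally have e: "(\<Sum>c\<in>B0. \<Sum>h\<in>Gc. \<Sum>t\<in>T. F h t c) = (\<Sum>h\<in>Gc. \<Sum>t\<in>T. \<Sum>c\<in>B0. F h t c)" .
    have "(\<Sum>c\<in>B0. \<alpha> * (\<Sum>h\<in>Gc. \<Sum>t\<in>T. F h t c)) = \<alpha> * (\<Sum>c\<in>B0. \<Sum>h\<in>Gc. \<Sum>t\<in>T. F h t c)"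
      by (simp add: sum_distrib_left)
    then show ?thesis using e unfolding F_def by simp
  qed
  also have "\<dots> = \<alpha> * (\<Sum>h\<in>Gc. \<Sum>t\<in>T. s (\<phi> (h, t)) * opA K dC G dG (\<phi> (h, t)) a b)"
  proof -
    have "(\<Sum>c\<in>B0. (r h * s t) * (opA K dC G dG (costar K G (-1) n x h) a c * opA K dC G dG t c b)) =
          s (\<phi> (h, t)) * opA K dC G dG (\<phi> (h, t)) a b" if "h \<in> Gc" "t \<in> T" for h t
      using rs[OF that] op[OF that] by (simp add: sum_distrib_left[symmetric])
    then show ?thesis by (intro arg_cong2[where f="(*)"] refl sum.cong) auto
  qed
  also have "\<dots> = \<alpha> * (\<Sum>q\<in>Gc \<times> T. s (\<phi> q) * opA K dC G dG (\<phi> q) a b)"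
    by (simp add: sum.cartesian_product)
  also have "\<dots> = \<alpha> * (\<Sum>t'\<in>Tset K G ((n, x) # xs). s t' * opA K dC G dG t' a b)"
    using sum.reindex[OF bij_betw_imp_inj_on[OF bij], of "\<lambda>t'. s t' * opA K dC G dG t' a b"]
      bij_betw_imp_surj_on[OF bij] by simp
  finally show ?case unfolding \<alpha>_def B0_def p cardT' by simp
qed

theorem partA:
  assumes s: "s \<in> homsub K G (-1)" and xs: "distinct xs" "set xs = Sigma UNIV K"
    and a: "a \<in> homsup K G 0" and b: "b \<in> homsup K G 0"
  shows "bigA K dC G dG s a b =
         mat_prod_list (homsup K G 0) (map (\<lambda>(n, x). locA K dC G dG n x (s_comp K G s n x)) xs) a b"
  using A_ind[OF s xs(1) _ a b] xs(2) Tset_all[OF xs(2)] by (simp add: bigA_def)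

end

theorem proposition13:
  fixes K :: "int \<Rightarrow> 'c set" and dC :: "int \<Rightarrow> 'c \<Rightarrow> 'c \<Rightarrow> int"
    and G :: "int \<Rightarrow> 'g monoid" and dG :: "int \<Rightarrow> 'g \<Rightarrow> 'g"
  assumes finK: "\<And>n. finite (K n)"
    and finsupp: "finite {n. K n \<noteq> {}}"
    and dCdC: "\<And>n x z. x \<in> K n \<Longrightarrow> z \<in> K (n - 2) \<Longrightarrow>
                 (\<Sum>y \<in> K (n - 1). dC n x y * dC (n - 1) y z) = 0"
    and grp: "\<And>n. comm_group (G n)"
    and finG: "\<And>n. finite (carrier (G n))"
    and dGhom: "\<And>n. dG n \<in> hom (G n) (G (n - 1))"
    and dGdG: "\<And>n a. a \<in> carrier (G n) \<Longrightarrow> dG (n - 1) (dG n a) = \<one>\<^bsub>G (n - 2)\<^esub>"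
  shows "(\<forall>s \<in> homsub K G (-1). \<forall>xs. distinct xs \<and> set xs = Sigma UNIV K \<longrightarrow>
            (\<forall>a \<in> homsup K G 0. \<forall>b \<in> homsup K G 0.
               bigA K dC G dG s a b =
               mat_prod_list (homsup K G 0)
                 (map (\<lambda>(n, x). locA K dC G dG n x (s_comp K G s n x)) xs) a b))
       \<and> (\<forall>v \<in> homsup K G 1. \<forall>xs. distinct xs \<and> set xs = Sigma UNIV K \<longrightarrow>
            (\<forall>a \<in> homsup K G 0. \<forall>b \<in> homsup K G 0.
               bigB K dC G dG v a b =
               mat_prod_list (homsup K G 0)
                 (map (\<lambda>(n, x). locB K dC G dG n x (v n x)) xs) a b))"
proof -
  have ps: "psetup K G dG" using finK finsupp grp finG dGhom by (simp add: psetup_def)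
  interpret psetup K dC G dG by (rule ps)
  show ?thesis
  proof (intro conjI ballI allI impI)
    fix s xs a b
    assume h: "s \<in> homsub K G (-1)" "distinct xs \<and> set xs = Sigma UNIV K"
      "a \<in> homsup K G 0" "b \<in> homsup K G 0"
    show "bigA K dC G dG s a b = mat_prod_list (homsup K G 0)
                 (map (\<lambda>(n, x). locA K dC G dG n x (s_comp K G s n x)) xs) a b"
      using h by (intro partA) auto
  next
    fix v xs a b
    assume h: "v \<in> homsup K G 1" "distinct xs \<and> set xs = Sigma UNIV K"
      "a \<in> homsup K G 0" "b \<in> homsup K G 0"
    show "bigB K dC G dG v a b = mat_prod_list (homsup K G 0)
                 (map (\<lambda>(n, x). locB K dC G dG n x (v n x)) xs) a b"
      using h by (intro partB) auto
  qed
qed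

end
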